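(* Let $\phi:\mathbb{R}^2\rightarrow\mathbb{R}^2$ be an invertible affine transformation and let $\sigma:\mathbb R^2\to\mathbb R^2$ be the coordinatewise $\textsc{ReLU}$, $\sigma(x_1,x_2)=(\max\{x_1,0\},\max\{x_2,0\})$. Then there exist $a_1,a_2\in\mathbb{R}^2$ and $b_1,b_2\in\mathbb{R}$ such that, with $\mathcal S:=\{x\in\mathbb R^2:\langle a_1,x\rangle+b_1\ge0,\ \langle a_2,x\rangle+b_2\ge0\}$ and $x^\prime:=\phi^{-1}\circ\sigma\circ\phi(x)$, the following hold: if $x\in\mathcal S$, then $x^\prime=x$; if $x\in\mathbb R^2\setminus\mathcal S$, then $x^\prime\ne x$ and $x^\prime\in\partial\mathcal S$.
   Context: $\partial\mathcal S$ denotes the boundary of $\mathcal S$. *)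

theory Defs
  imports "HOL-Analysis.Analysis"
begin

definition relu2 :: "real^2 \<Rightarrow> real^2" where
  "relu2 x = (\<chi> i. max (x $ i) 0)"

end

theory Submission
  imports Defs
begin

lemma relu2_fix: "relu2 y = y \<longleftrightarrow> 0 \<le> y$1 \<and> 0 \<le> y$2"
  unfolding relu2_def vec_eq_iff by (auto simp: forall_2 max_def)

lemma relu2_nonneg: "0 \<le> relu2 y $ i"
  unfolding relu2_def by simp

lemma relu2_zero:
  assumes "\<not> (0 \<le> y$1 \<and> 0 \<le> y$2)"
  shows "\<exists>i. relu2 y $ i = 0"
  using assms unfolding relu2_def by (auto simp: max_def intro: exI[of _ 1] exI[of _ 2])

lemma aux_half: "(n::real) \<noteq> 0 \<Longrightarrow> e / (2 * n) * n = e / 2"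
  by (simp add: field_simps)

lemma row_inner: "(A *v x) $ i = (A $ i) \<bullet> (x::real^'n)"
  by (simp add: matrix_vector_mult_def inner_vec_def mult.commute)

theorem lemma1:
  fixes \<phi> :: "real^2 \<Rightarrow> real^2" and A :: "real^2^2" and c :: "real^2"
  assumes "invertible A"
    and "\<phi> = (\<lambda>x. A *v x + c)"
  shows "\<exists>(a1::real^2) (a2::real^2) (b1::real) (b2::real).
           (let S = {x. a1 \<bullet> x + b1 \<ge> 0 \<and> a2 \<bullet> x + b2 \<ge> 0};
                f = (\<lambda>x. inv \<phi> (relu2 (\<phi> x)))
            in (\<forall>x\<in>S. f x = x) \<and>
               (\<forall>x. x \<notin> S \<longrightarrow> f x \<noteq> x \<and> f x \<in> frontier S))"
proof -
  obtain B :: "real^2^2" where AB: "A ** B = mat 1" and BA: "B ** A = mat 1"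
    using assms(1) unfolding invertible_def by blast
  define \<psi> where "\<psi> = (\<lambda>y. B *v (y - c))"
  have pf: "\<phi> (\<psi> y) = y" for y
    by (simp add: assms(2) \<psi>_def matrix_vector_mul_assoc AB)
  have fp: "\<psi> (\<phi> x) = x" for x
    by (simp add: assms(2) \<psi>_def matrix_vector_mul_assoc BA)
  have invp: "inv \<phi> = \<psi>"
    by (rule inv_equality[OF fp pf])
  define S where "S = {x. A$1 \<bullet> x + c$1 \<ge> 0 \<and> A$2 \<bullet> x + c$2 \<ge> 0}"
  have S_iff: "x \<in> S \<longleftrightarrow> 0 \<le> (\<phi> x)$1 \<and> 0 \<le> (\<phi> x)$2" for x
    by (simp add: S_def assms(2) row_inner)
  define f where "f = (\<lambda>x. inv \<phi> (relu2 (\<phi> x)))"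
  have pfx: "\<phi> (f x) = relu2 (\<phi> x)" for x
    by (simp add: f_def invp pf)
  have P1: "\<forall>x\<in>S. f x = x"
  proof
    fix x assume "x \<in> S"
    then have "relu2 (\<phi> x) = \<phi> x" using S_iff relu2_fix by blast
    then show "f x = x" by (simp add: f_def invp fp)
  qed
  have P2: "f x \<noteq> x \<and> f x \<in> frontier S" if xS: "x \<notin> S" for x
  proof
    have nf: "\<not> (0 \<le> (\<phi> x)$1 \<and> 0 \<le> (\<phi> x)$2)" using xS S_iff by blast
    show "f x \<noteq> x"
    proof
      assume "f x = x"
      then have "relu2 (\<phi> x) = \<phi> x" using pfx by metis
      then show False using nf relu2_fix by blast
    qed
    let ?y = "f x"
    have yS: "?y \<in> S" using S_iff pfx relu2_nonneg by metis
    obtain i where i0: "(\<phi> ?y) $ i = 0" using relu2_zero[OF nf] pfx by metis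
    have "?y \<notin> interior S"
    proof
      assume "?y \<in> interior S"
      then obtain e where e: "e > 0" "ball ?y e \<subseteq> S"
        using mem_interior by blast
      define v where "v = B *v axis i 1"
      define t where "t = e / (2 * (norm v + 1))"
      have tpos: "t > 0" using e(1) unfolding t_def by (intro divide_pos_pos mult_pos_pos add_nonneg_pos) auto
      define z where "z = ?y - t *\<^sub>R v"
      have "dist ?y z = t * norm v" using tpos by (simp add: z_def dist_norm)
      also have "\<dots> < e"
      proof -
        have "t * norm v \<le> t * (norm v + 1)" using tpos by simp
        also have "\<dots> = e / 2"
        proof -
          have "norm v + 1 \<noteq> 0" using norm_ge_zero[of v] by linarith
          then show ?thesis unfolding t_def
            by (rule aux_half)
        qed
        finally show ?thesis using e(1) by simp
      qed
      finally have "z \<in> S" using e(2) by auto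
      moreover have "\<phi> z = \<phi> ?y - t *\<^sub>R axis i 1"
        by (simp add: assms(2) z_def v_def matrix_vector_mult_diff_distrib
            matrix_vector_mult_scaleR matrix_vector_mul_assoc AB algebra_simps)
      then have "(\<phi> z) $ i = - t" using i0 by (simp add: axis_def)
      ultimately show False using S_iff tpos exhaust_2[of i] by force
    qed
    moreover have "?y \<in> closure S" using yS closure_subset by blast
    ultimately show "f x \<in> frontier S" by (simp add: frontier_def)
  qed
  show ?thesis
    apply (rule exI[of _ "A$1"], rule exI[of _ "A$2"], rule exI[of _ "c$1"], rule exI[of _ "c$2"])
    unfolding Let_def S_def[symmetric] f_def[symmetric] using P1 P2 by blast
qed

end
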